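(* Let $\Delta x>0$, $x_i\in\mathbb{R}$, $M\in\mathbb{N}_0$, and let $p_h(x;x_i,\Delta x)=\sum_{m=0}^{M}c_{h_m}\left(\frac{x-x_i}{\Delta x}\right)^m$ be a polynomial of degree $M$. Then $$p_f(x;x_i,\Delta x):=\frac{1}{\Delta x}\int_{x-\frac12\Delta x}^{x+\frac12\Delta x}p_h(\zeta;x_i,\Delta x)\,d\zeta$$ is a polynomial also of degree $M$, $p_f(x;x_i,\Delta x)=\sum_{m=0}^M c_{f_m}\left(\frac{x-x_i}{\Delta x}\right)^m$, with $$c_{f_m}=\sum_{k=0}^{\lfloor (M-m)/2\rfloor}\frac{c_{h_{m+2k}}}{2^{2k}(2k+1)}\binom{m+2k}{2k},\qquad\text{equivalently}\qquad m!\,c_{f_m}=\sum_{k=0}^{\lfloor (M-m)/2\rfloor}\frac{(m+2k)!}{2^{2k}(2k+1)!}c_{h_{m+2k}},$$ for all $m\in\{0,\dots,M\}$. Inversely, $$c_{h_m}=\frac{1}{m!}\sum_{k=0}^{\lfloor (M-m)/2\rfloor}\tau_{2k}\,c_{f_{m+2k}}\,(m+2k)!\qquad\forall m\in\{0,\dots,M\},$$ where $\tau_0=1$ and $\tau_{2k}=\sum_{s=0}^{k-1}\frac{-\tau_{2s}}{2^{2k-2s}(2k-2s+1)!}$ for $k>0$ (equivalently $\tau_n=g_\tau^{(n)}(0)/n!$ with $g_\tau(x)=\frac{x/2}{\sinh(x/2)}$). *)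

theory Defs
  imports "HOL-Analysis.Analysis"
begin

text \<open>tau2 k stands for the paper's tau_{2k}: tau_0 = 1 and for k > 0
  tau_{2k} = sum_{s=0}^{k-1} - tau_{2s} / (2^(2k-2s) (2k-2s+1)!).\<close>
function tau2 :: "nat \<Rightarrow> real" where
  "tau2 k = (if k = 0 then 1
     else (\<Sum>s\<in>{..<k}. (- tau2 s) / ((2::real) ^ (2 * k - 2 * s) * fact (2 * k - 2 * s + 1))))"
  by auto
termination by (relation "Wellfounded.measure id") auto

definition scaled_poly :: "(nat \<Rightarrow> real) \<Rightarrow> nat \<Rightarrow> real \<Rightarrow> real \<Rightarrow> real \<Rightarrow> real" where
  "scaled_poly c M xi dx x = (\<Sum>m\<le>M. c m * ((x - xi) / dx) ^ m)"

definition cell_avg :: "(real \<Rightarrow> real) \<Rightarrow> real \<Rightarrow> real \<Rightarrow> real" where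
  "cell_avg p dx x = (1 / dx) * integral {x - dx/2 .. x + dx/2} p"

end

theory Submission
  imports Defs
begin

lemma reidx:
  "(\<Sum>m\<le>M. \<Sum>k\<le>(M-m) div 2. g m k) = (\<Sum>n\<le>(M::nat). \<Sum>k\<le>n div 2. g (n-2*k) k)"
proof -
  have "(\<Sum>m\<le>M. \<Sum>k\<le>(M-m) div 2. g m k) = (\<Sum>(m,k)\<in>Sigma {..M} (\<lambda>m. {..(M-m) div 2}). g m k)"
    by (simp add: sum.Sigma)
  also have "\<dots> = (\<Sum>(n,k)\<in>Sigma {..M} (\<lambda>n. {..n div 2}). g (n-2*k) k)"
    by (rule sum.reindex_bij_witness[where j="\<lambda>(m,k). (m+2*k,k)" and i="\<lambda>(n,k). (n-2*k,k)"]) auto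
  also have "\<dots> = (\<Sum>n\<le>(M::nat). \<Sum>k\<le>n div 2. g (n-2*k) k)"
    by (simp add: sum.Sigma)
  finally show ?thesis .
qed

lemma odd_extract:
  fixes f :: "nat \<Rightarrow> real"
  assumes "\<And>k. f (2*k) = 0"
  shows "(\<Sum>j\<le>Suc n. f j) = (\<Sum>k\<le>n div 2. f (2*k+1))"
proof -
  have "(\<Sum>k\<le>n div 2. f (2*k+1)) = sum f ((\<lambda>k. 2*k+1) ` {..n div 2})"
    by (subst sum.reindex) (auto simp: inj_on_def)
  also have "\<dots> = (\<Sum>j\<le>Suc n. f j)"
  proof (rule sum.mono_neutral_left)
    show "(\<lambda>k. 2*k+1) ` {..n div 2} \<subseteq> {..Suc n}" by auto
    show "\<forall>i\<in>{..Suc n} - (\<lambda>k. 2 * k + 1) ` {..n div 2}. f i = 0"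
    proof
      fix i assume i: "i \<in> {..Suc n} - (\<lambda>k. 2 * k + 1) ` {..n div 2}"
      have "even i"
      proof (rule ccontr)
        assume "odd i"
        then obtain k where "i = 2*k+1" by (metis oddE)
        with i show False by auto
      qed
      then show "f i = 0" using assms by (metis evenE)
    qed
  qed auto
  finally show ?thesis by simp
qed

lemma diff_pow:
  fixes u :: real
  shows "((u+1/2)^(Suc n) - (u-1/2)^(Suc n)) / (Suc n)
     = (\<Sum>k\<le>n div 2. u^(n-2*k) * real (n choose (2*k)) / (2^(2*k) * (2 * real k + 1)))"
proof -
  define f where "f j = real (Suc n choose j) * ((1/2)^j - (-1/2)^j) * u^(Suc n - j)" for j
  have "(u+1/2)^(Suc n) - (u-1/2)^(Suc n) = (\<Sum>j\<le>Suc n. f j)"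
    using binomial_ring[of "1/2::real" u "Suc n"] binomial_ring[of "-1/2::real" u "Suc n"]
    by (simp add: f_def add.commute sum_subtractf algebra_simps)
  also have "\<dots> = (\<Sum>k\<le>n div 2. f (2*k+1))"
    by (rule odd_extract) (simp add: f_def)
  finally have "((u+1/2)^(Suc n) - (u-1/2)^(Suc n)) / (Suc n) = (\<Sum>k\<le>n div 2. f (2*k+1) / Suc n)"
    by (simp add: sum_divide_distrib)
  also have "\<dots> = (\<Sum>k\<le>n div 2. u^(n-2*k) * real (n choose (2*k)) / (2^(2*k) * (2 * real k + 1)))"
  proof (rule sum.cong[OF refl])
    fix k assume "k \<in> {..n div 2}"
    have b: "real (Suc (2*k)) * real (Suc n choose Suc (2*k)) = real (Suc n) * real (n choose (2*k))"
      using Suc_times_binomial[of "2*k" n] by (metis of_nat_mult)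
    have e: "Suc n - (2*k+1) = n - 2*k" by simp
    have "f (2*k+1) = real (Suc n choose Suc (2*k)) * (2 * (1/2)^(2*k+1)) * u^(n-2*k)"
      unfolding f_def e by (simp add: power_add)
    also have "\<dots> = real (Suc n choose Suc (2*k)) / 2^(2*k) * u^(n-2*k)"
      by (simp add: power_add power_one_over)
    finally have ff: "f (2*k+1) = real (Suc n choose Suc (2*k)) / 2^(2*k) * u^(n-2*k)" .
    define A where "A = real (Suc n choose Suc (2*k))"
    define B where "B = real (n choose (2*k))"
    have b': "A = real (Suc n) * B / (2 * real k + 1)"
      using b unfolding A_def[symmetric] B_def[symmetric] by (simp add: field_simps)
    have "f (2*k+1) / Suc n = A / 2^(2*k) * u^(n-2*k) / real (Suc n)"
      using ff A_def by simp
    also have "\<dots> = u^(n-2*k) * B / (2^(2*k) * (2 * real k + 1))"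
    proof -
      have p1: "(2 * real k + 1) \<noteq> 0" "real (Suc n) \<noteq> 0" by auto
      have gen: "\<And>N K P U B::real. N \<noteq> 0 \<Longrightarrow> K \<noteq> 0 \<Longrightarrow> P \<noteq> 0 \<Longrightarrow> (N*B/K)/P*U/N = U*B/(P*K)"
        by (simp add: field_simps)
      show ?thesis unfolding b' by (rule gen) (use p1 in auto)
    qed
    finally show "f (2*k+1) / Suc n = u^(n-2*k) * real (n choose (2*k)) / (2^(2*k) * (2 * real k + 1))"
      by (simp add: B_def)
  qed
  finally show ?thesis .
qed


lemma integral_poly:
  assumes dx: "dx > 0"
  shows "integral {x - dx/2 .. x + dx/2} (scaled_poly ch M xi dx)
    = dx * (\<Sum>n\<le>M. ch n * (((((x-xi)/dx)+1/2)^(Suc n) - (((x-xi)/dx)-1/2)^(Suc n)) / Suc n))"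
proof -
  define F where "F z = (\<Sum>n\<le>M. ch n * dx * ((z-xi)/dx)^(Suc n) / Suc n)" for z
  have der: "(F has_real_derivative scaled_poly ch M xi dx z) (at z)" for z
  proof -
    have "((\<lambda>z. ch n * dx * ((z-xi)/dx)^(Suc n) / Suc n) has_real_derivative ch n * ((z-xi)/dx)^n) (at z)" for n
    proof -
      have h1: "((\<lambda>z. (z-xi)/dx) has_real_derivative 1/dx) (at z)"
        using dx by (auto intro!: derivative_eq_intros)
      have h2: "((\<lambda>z. (ch n * dx / Suc n) * ((z-xi)/dx)^(Suc n)) has_real_derivative
          (ch n * dx / Suc n) * (real (Suc n) * (1/dx * ((z-xi)/dx)^(Suc n - Suc 0)))) (at z)"
        by (rule DERIV_cmult, rule DERIV_power, rule h1)
      have e: "(ch n * dx / Suc n) * (real (Suc n) * (1/dx * ((z-xi)/dx)^(Suc n - Suc 0))) = ch n * ((z-xi)/dx)^n"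
        using dx by (simp del: of_nat_Suc)
      show ?thesis using h2 unfolding e by (simp add: field_simps)
    qed
    then show ?thesis unfolding F_def scaled_poly_def by (rule DERIV_sum)
  qed
  have "(scaled_poly ch M xi dx has_integral (F (x + dx/2) - F (x - dx/2))) {x - dx/2 .. x + dx/2}"
    apply (rule fundamental_theorem_of_calculus)
    using dx apply simp
    using der by (metis has_field_derivative_at_within has_real_derivative_iff_has_vector_derivative)
  then have "integral {x - dx/2 .. x + dx/2} (scaled_poly ch M xi dx) = F (x + dx/2) - F (x - dx/2)"
    by (rule integral_unique)
  also have "\<dots> = dx * (\<Sum>n\<le>M. ch n * (((((x-xi)/dx)+1/2)^(Suc n) - (((x-xi)/dx)-1/2)^(Suc n)) / Suc n))"
  proof -
    have e1: "(x + dx/2 - xi)/dx = (x-xi)/dx + 1/2" and e2: "(x - dx/2 - xi)/dx = (x-xi)/dx - 1/2"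
      using dx by (simp_all add: field_simps)
    show ?thesis unfolding F_def e1 e2 sum_subtractf[symmetric] sum_distrib_left
    proof (rule sum.cong[OF refl])
      fix n
      define A where "A = ((x - xi) / dx + 1 / 2) ^ Suc n"
      define B where "B = ((x - xi) / dx - 1 / 2) ^ Suc n"
      show "ch n * dx * ((x - xi) / dx + 1 / 2) ^ Suc n / real (Suc n) -
         ch n * dx * ((x - xi) / dx - 1 / 2) ^ Suc n / real (Suc n) =
         dx * (ch n * ((((x - xi) / dx + 1 / 2) ^ Suc n - ((x - xi) / dx - 1 / 2) ^ Suc n) / real (Suc n)))"
        unfolding A_def[symmetric] B_def[symmetric] by (simp add: algebra_simps diff_divide_distrib)
    qed
  qed
  finally show ?thesis .
qed

lemma conv_tau:
  "(\<Sum>k\<le>n. tau2 k * (1 / (2^(2*(n-k)) * fact (2*(n-k)+1)))) = (if n = 0 then 1 else (0::real))"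
proof (cases "n = 0")
  case True then show ?thesis by (simp add: tau2.simps)
next
  case False
  have t: "tau2 n = (\<Sum>s<n. (- tau2 s) / ((2::real) ^ (2 * n - 2 * s) * fact (2 * n - 2 * s + 1)))"
    using False by (subst tau2.simps) simp
  have "(\<Sum>k\<le>n. tau2 k * (1 / (2^(2*(n-k)) * fact (2*(n-k)+1))))
     = (\<Sum>k<n. tau2 k * (1 / (2^(2*(n-k)) * fact (2*(n-k)+1)))) + tau2 n"
    by (simp add: lessThan_Suc_atMost[symmetric])
  also have "tau2 n = - (\<Sum>k<n. tau2 k * (1 / (2^(2*(n-k)) * fact (2*(n-k)+1))))"
    unfolding t sum_negf[symmetric] by (rule sum.cong) (auto simp: diff_mult_distrib2)
  finally show ?thesis using False by simp
qed

theorem lemma3: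
  fixes dx xi :: real and M :: nat and ch cf :: "nat \<Rightarrow> real"
  assumes "dx > 0"
    and "ch M \<noteq> 0"
    and "\<And>m. cf m = (\<Sum>k\<le>(M - m) div 2.
            ch (m + 2*k) / ((2::real) ^ (2*k) * (2 * real k + 1)) * real ((m + 2*k) choose (2*k)))"
  shows "(\<forall>x. cell_avg (scaled_poly ch M xi dx) dx x = scaled_poly cf M xi dx x)
    \<and> cf M \<noteq> 0
    \<and> (\<forall>m\<le>M. fact m * cf m = (\<Sum>k\<le>(M - m) div 2.
            fact (m + 2*k) / (2 ^ (2*k) * fact (2*k + 1)) * ch (m + 2*k)))
    \<and> (\<forall>m\<le>M. ch m = 1 / fact m * (\<Sum>k\<le>(M - m) div 2.
            tau2 k * cf (m + 2*k) * fact (m + 2*k)))"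
proof (intro conjI allI impI)
  fix x
  define u where "u = (x-xi)/dx"
  define g where "g m k = ch (m + 2*k) / ((2::real) ^ (2*k) * (2 * real k + 1)) * real ((m + 2*k) choose (2*k)) * u^m" for m k
  have "cell_avg (scaled_poly ch M xi dx) dx x
      = (\<Sum>n\<le>M. ch n * (((u+1/2)^(Suc n) - (u-1/2)^(Suc n)) / Suc n))"
    unfolding cell_avg_def integral_poly[OF assms(1)] u_def using assms(1) by simp
  also have "\<dots> = (\<Sum>n\<le>M. \<Sum>k\<le>n div 2. g (n-2*k) k)"
  proof (rule sum.cong[OF refl])
    fix n assume "n \<in> {..M}"
    show "ch n * (((u+1/2)^(Suc n) - (u-1/2)^(Suc n)) / Suc n) = (\<Sum>k\<le>n div 2. g (n-2*k) k)"
      unfolding diff_pow sum_distrib_left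
    proof (rule sum.cong[OF refl])
      fix k assume "k \<in> {..n div 2}"
      then have "n - 2*k + 2*k = n" by auto
      then show "ch n * (u ^ (n - 2 * k) * real (n choose (2 * k)) / (2 ^ (2 * k) * (2 * real k + 1))) = g (n - 2 * k) k"
        unfolding g_def by simp
    qed
  qed
  also have "\<dots> = (\<Sum>m\<le>M. \<Sum>k\<le>(M-m) div 2. g m k)" by (rule reidx[symmetric])
  also have "\<dots> = scaled_poly cf M xi dx x"
    unfolding scaled_poly_def assms(3) u_def[symmetric] g_def sum_distrib_right by simp
  finally show "cell_avg (scaled_poly ch M xi dx) dx x = scaled_poly cf M xi dx x" .
next
  show "cf M \<noteq> 0" using assms(2) assms(3)[of M] by simp
next
  have p3: "fact m * cf m = (\<Sum>k\<le>(M - m) div 2.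
            fact (m + 2*k) / (2 ^ (2*k) * fact (2*k + 1)) * ch (m + 2*k))" for m
    unfolding assms(3)[of m] sum_distrib_left
  proof (rule sum.cong[OF refl])
    fix k
    have c: "real ((m + 2*k) choose (2*k)) = fact (m+2*k) / (fact (2*k) * fact m)"
      by (subst binomial_fact) auto
    have f: "fact (2*k+1) = (2 * real k + 1) * (fact (2*k) :: real)"
      by (simp add: fact_Suc algebra_simps)
    show "fact m * (ch (m + 2 * k) / (2 ^ (2 * k) * (2 * real k + 1)) * real (m + 2 * k choose (2 * k))) =
         fact (m + 2 * k) / (2 ^ (2 * k) * fact (2 * k + 1)) * ch (m + 2 * k)"
    proof -
      have nz: "(2 ^ (2 * k) * (2 * real k + 1)) \<noteq> 0" "fact (2*k) \<noteq> (0::real)" "fact m \<noteq> (0::real)"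
        by auto
      have gen: "\<And>F A X. F \<noteq> 0 \<Longrightarrow> X \<noteq> 0 \<Longrightarrow> F * A / (F * X) = A / (X::real)" by simp
      show ?thesis unfolding c f by simp
    qed
  qed
  fix m :: nat assume "m \<le> M"
  show "fact m * cf m = (\<Sum>k\<le>(M - m) div 2.
            fact (m + 2*k) / (2 ^ (2*k) * fact (2*k + 1)) * ch (m + 2*k))" by (rule p3)
next
  fix m :: nat assume mM: "m \<le> M"
  define D where "D = (M - m) div 2"
  define a where "a n = fact n * ch n" for n
  define w where "w j = 1 / ((2::real)^(2*j) * fact (2*j+1))" for j
  have p3: "fact n * cf n = (\<Sum>j\<le>(M - n) div 2. w j * a (n + 2*j))" for n
    unfolding assms(3)[of n] sum_distrib_left
  proof (rule sum.cong[OF refl])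
    fix k
    have c: "real ((n + 2*k) choose (2*k)) = fact (n+2*k) / (fact (2*k) * fact n)"
      by (subst binomial_fact) auto
    have f: "fact (2*k+1) = (2 * real k + 1) * (fact (2*k) :: real)"
      by (simp add: fact_Suc algebra_simps)
    show "fact n * (ch (n + 2 * k) / (2 ^ (2 * k) * (2 * real k + 1)) * real (n + 2 * k choose (2 * k))) =
         w k * a (n + 2 * k)"
      unfolding c w_def a_def f by simp
  qed
  have "(\<Sum>k\<le>D. tau2 k * cf (m + 2*k) * fact (m + 2*k))
      = (\<Sum>k\<le>D. \<Sum>j\<le>D-k. tau2 k * w j * a (m + 2*k + 2*j))"
  proof (rule sum.cong[OF refl])
    fix k assume "k \<in> {..D}"
    then have e: "(M - (m + 2*k)) div 2 = D - k" unfolding D_def by auto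
    show "tau2 k * cf (m + 2*k) * fact (m + 2*k) = (\<Sum>j\<le>D-k. tau2 k * w j * a (m + 2*k + 2*j))"
      using p3[of "m+2*k"] unfolding e by (simp add: sum_distrib_left algebra_simps del: tau2.simps)
  qed
  also have "\<dots> = (\<Sum>(k,j)\<in>{(k,j). k+j \<le> D}. tau2 k * w j * a (m + 2*k + 2*j))"
    by (simp add: sum.Sigma) (rule sum.cong; auto)
  also have "\<dots> = (\<Sum>n\<le>D. \<Sum>k\<le>n. tau2 k * w (n-k) * a (m + 2*k + 2*(n-k)))"
    by (rule sum.triangle_reindex_eq)
  also have "\<dots> = (\<Sum>n\<le>D. a (m + 2*n) * (\<Sum>k\<le>n. tau2 k * w (n-k)))"
    unfolding sum_distrib_left
    by (rule sum.cong[OF refl], rule sum.cong[OF refl]) (auto simp: algebra_simps)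
  also have "\<dots> = (\<Sum>n\<le>D. if n = 0 then a m else 0)"
    using conv_tau unfolding w_def by (intro sum.cong) auto
  also have "\<dots> = a m" by (simp add: sum.delta)
  finally show "ch m = 1 / fact m * (\<Sum>k\<le>(M - m) div 2. tau2 k * cf (m + 2*k) * fact (m + 2*k))"
    unfolding D_def a_def by simp
qed

end
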